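(* Let $\Phi$ satisfy Assumption F1, and let the dag $D$ (designated nodes $s',t'$, at most $n+2$ nodes) and map $\rho:\{1,\dots,n\}\to V(D)$ be as in the characterization theorem, i.e. $x\mapsto$ the ideal $I$ with $\{i:x_i=0\}=\{i:\rho(i)=t'\}\cup\rho^{-1}(I)$ is a bijection from $\mathrm{opt}(\Phi)$ onto the ideals of $D-\{s',t'\}$. Given $D$, $\rho$ and nonnegative weights $w_1,\dots,w_n$ as input, the diameter $\max_{x,y\in\mathrm{opt}(\Phi)}\sum_i w_i|x_i-y_i|$ of $\mathrm{opt}(\Phi)$ in weighted Hamming distance can be computed in $O(n)$ time.
   Context: Assumption F1: $\Phi(x)=-\sum_{1\le i<j\le n}a_{i,j}x_ix_j+\sum_{i=1}^n b_ix_i$ on $x\in\{0,1\}^n$, with all $a_{i,j}\ge0$ and $b_i$ arbitrary rationals. $\mathrm{opt}(\Phi)$ = set of minimizers of $\Phi$. An ideal of a digraph is a node set $I$ such that every predecessor of a node of $I$ is in $I$. *)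

theory Defs
  imports Complex_Main
begin

definition cube :: "nat \<Rightarrow> (nat \<Rightarrow> nat) set" where
  "cube n = {x. (\<forall>i\<in>{1..n}. x i \<in> {0,1}) \<and> (\<forall>i. i \<notin> {1..n} \<longrightarrow> x i = 0)}"

definition Phi :: "nat \<Rightarrow> (nat \<Rightarrow> nat \<Rightarrow> rat) \<Rightarrow> (nat \<Rightarrow> rat) \<Rightarrow> (nat \<Rightarrow> nat) \<Rightarrow> rat" where
  "Phi n a b x = - (\<Sum>j\<in>{1..n}. \<Sum>i\<in>{1..<j}. a i j * of_nat (x i) * of_nat (x j))
                 + (\<Sum>i\<in>{1..n}. b i * of_nat (x i))"

definition opt :: "nat \<Rightarrow> (nat \<Rightarrow> nat \<Rightarrow> rat) \<Rightarrow> (nat \<Rightarrow> rat) \<Rightarrow> (nat \<Rightarrow> nat) set" where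
  "opt n a b = {x \<in> cube n. \<forall>y \<in> cube n. Phi n a b x \<le> Phi n a b y}"

definition is_ideal_del :: "'v set \<Rightarrow> ('v \<times> 'v) set \<Rightarrow> 'v \<Rightarrow> 'v \<Rightarrow> 'v set \<Rightarrow> bool" where
  "is_ideal_del V E s t I \<longleftrightarrow> I \<subseteq> V - {s, t} \<and>
     (\<forall>u v. (u, v) \<in> E \<longrightarrow> u \<in> V - {s, t} \<longrightarrow> v \<in> I \<longrightarrow> u \<in> I)"

definition corresponds :: "nat \<Rightarrow> (nat \<Rightarrow> 'v) \<Rightarrow> 'v \<Rightarrow> (nat \<Rightarrow> nat) \<Rightarrow> 'v set \<Rightarrow> bool" where
  "corresponds n \<rho> t x I \<longleftrightarrow>
     {i\<in>{1..n}. x i = 0} = {i\<in>{1..n}. \<rho> i = t} \<union> {i\<in>{1..n}. \<rho> i \<in> I}"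

definition whamming :: "nat \<Rightarrow> (nat \<Rightarrow> real) \<Rightarrow> (nat \<Rightarrow> nat) \<Rightarrow> (nat \<Rightarrow> nat) \<Rightarrow> real" where
  "whamming n w x y = (\<Sum>i\<in>{1..n}. w i * \<bar>real (x i) - real (y i)\<bar>)"

definition diameter :: "nat \<Rightarrow> (nat \<Rightarrow> real) \<Rightarrow> (nat \<Rightarrow> nat) set \<Rightarrow> real" where
  "diameter n w S = Max {whamming n w x y | x y. x \<in> S \<and> y \<in> S}"

text \<open>An explicit algorithm on the input (D, rho, w), instrumented with a step counter
  (one unit per elementary loop iteration); it returns (result, number of steps).\<close>
fun diam_alg :: "(nat \<Rightarrow> 'v) \<Rightarrow> 'v \<Rightarrow> 'v \<Rightarrow> (nat \<Rightarrow> real) \<Rightarrow> nat list \<Rightarrow> real \<times> nat" where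
  "diam_alg \<rho> s t w [] = (0, 1)"
| "diam_alg \<rho> s t w (i # is) =
     (case diam_alg \<rho> s t w is of (r, c) \<Rightarrow>
        ((if \<rho> i \<noteq> s \<and> \<rho> i \<noteq> t then w i else 0) + r, c + 1))"

end

theory Submission
  imports Defs "HOL-Library.FuncSet"
begin

lemma diam_alg_eq:
  "diam_alg \<rho> s t w xs = (\<Sum>i\<leftarrow>xs. if \<rho> i \<noteq> s \<and> \<rho> i \<noteq> t then w i else 0, length xs + 1)"
  by (induction xs) auto

lemma finite_cube: "finite (cube n)"
proof -
  have "cube n \<subseteq> (\<lambda>f i. if i \<in> {1..n} then f i else 0) ` (PiE {1..n} (\<lambda>_. {0,1::nat}))"
  proof
    fix x assume x: "x \<in> cube n"
    have "x = (\<lambda>i. if i \<in> {1..n} then restrict x {1..n} i else 0)"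
    proof
      fix i show "x i = (if i \<in> {1..n} then restrict x {1..n} i else 0)"
        using x unfolding cube_def by (cases "i \<in> {1..n}") auto
    qed
    moreover have "restrict x {1..n} \<in> PiE {1..n} (\<lambda>_. {0,1::nat})"
      using x unfolding cube_def by auto
    ultimately show "x \<in> (\<lambda>f i. if i \<in> {1..n} then f i else 0) ` (PiE {1..n} (\<lambda>_. {0,1::nat}))"
      by blast
  qed
  moreover have "finite (PiE {1..n} (\<lambda>_. {0,1::nat}))" by (rule finite_PiE) auto
  ultimately show ?thesis by (meson finite_imageI finite_subset)
qed

theorem mainTheorem9:
  fixes n :: nat and a :: "nat \<Rightarrow> nat \<Rightarrow> rat" and b :: "nat \<Rightarrow> rat"
    and V :: "'v set" and E :: "('v \<times> 'v) set" and s t :: 'v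
    and \<rho> :: "nat \<Rightarrow> 'v" and w :: "nat \<Rightarrow> real"
  assumes a_nonneg: "\<And>i j. 1 \<le> i \<Longrightarrow> i < j \<Longrightarrow> j \<le> n \<Longrightarrow> a i j \<ge> 0"
    and finV: "finite V" and cardV: "card V \<le> n + 2"
    and E_V: "E \<subseteq> V \<times> V" and dag: "acyclic E"
    and st: "s \<in> V" "t \<in> V" "s \<noteq> t"
    and rho_V: "\<rho> ` {1..n} \<subseteq> V"
    and bij1: "\<forall>x \<in> opt n a b. \<exists>!I. is_ideal_del V E s t I \<and> corresponds n \<rho> t x I"
    and bij2: "\<forall>I. is_ideal_del V E s t I \<longrightarrow> (\<exists>!x. x \<in> opt n a b \<and> corresponds n \<rho> t x I)"
    and w_nonneg: "\<And>i. w i \<ge> 0"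
  shows "fst (diam_alg \<rho> s t w [1..<n+1]) = diameter n w (opt n a b)
         \<and> snd (diam_alg \<rho> s t w [1..<n+1]) \<le> n + 1"
proof -
  define W where "W = (\<Sum>i\<in>{1..n}. if \<rho> i \<noteq> s \<and> \<rho> i \<noteq> t then w i else 0)"
  have fstW: "fst (diam_alg \<rho> s t w [1..<n+1]) = W"
    unfolding diam_alg_eq W_def
  proof -
    have "set [1..<n+1] = {1..n}" by auto
    then show "fst (\<Sum>i\<leftarrow>[1..<n+1]. if \<rho> i \<noteq> s \<and> \<rho> i \<noteq> t then w i else 0, length [1..<n+1] + 1) =
      (\<Sum>i\<in>{1..n}. if \<rho> i \<noteq> s \<and> \<rho> i \<noteq> t then w i else 0)"
      by (simp only: fst_conv sum_list_distinct_conv_sum_set[OF distinct_upt])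
  qed
  have snd: "snd (diam_alg \<rho> s t w [1..<n+1]) \<le> n + 1"
    unfolding diam_alg_eq by simp
  have oc: "opt n a b \<subseteq> cube n" unfolding opt_def by auto
  have props: "(\<rho> i = t \<longrightarrow> x i = 0) \<and> (\<rho> i = s \<longrightarrow> x i = 1) \<and> x i \<le> 1"
    if x: "x \<in> opt n a b" and i: "i \<in> {1..n}" for x i
  proof -
    obtain I where I: "is_ideal_del V E s t I" "corresponds n \<rho> t x I" using bij1 x by blast
    have "x \<in> cube n" using x oc by blast
    then have xc: "x i \<in> {0,1}" using i unfolding cube_def by blast
    have e: "{i\<in>{1..n}. x i = 0} = {i\<in>{1..n}. \<rho> i = t} \<union> {i\<in>{1..n}. \<rho> i \<in> I}"
      using I(2) unfolding corresponds_def .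
    have "x i = 0 \<longleftrightarrow> i \<in> {i\<in>{1..n}. x i = 0}" using i by simp
    also have "\<dots> \<longleftrightarrow> \<rho> i = t \<or> \<rho> i \<in> I" unfolding e using i by simp
    finally have "x i = 0 \<longleftrightarrow> \<rho> i = t \<or> \<rho> i \<in> I" .
    moreover have "\<rho> i \<noteq> s \<or> \<rho> i \<notin> I" using I(1) unfolding is_ideal_del_def by blast
    ultimately show ?thesis using xc st(3) by auto
  qed
  have le: "whamming n w x y \<le> W" if x: "x \<in> opt n a b" and y: "y \<in> opt n a b" for x y
    unfolding whamming_def W_def
  proof (rule sum_mono)
    fix i assume i: "i \<in> {1..n}"
    note px = props[OF x i] and py = props[OF y i]
    have "\<bar>real (x i) - real (y i)\<bar> \<le> 1" using px py by auto
    then have "w i * \<bar>real (x i) - real (y i)\<bar> \<le> w i"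
      using w_nonneg[of i] by (simp add: mult_left_le)
    moreover have "\<rho> i = t \<or> \<rho> i = s \<Longrightarrow> x i = y i" using px py by auto
    ultimately show "w i * \<bar>real (x i) - real (y i)\<bar> \<le> (if \<rho> i \<noteq> s \<and> \<rho> i \<noteq> t then w i else 0)"
      by auto
  qed
  have id0: "is_ideal_del V E s t {}" unfolding is_ideal_del_def by auto
  have id1: "is_ideal_del V E s t (V - {s,t})" unfolding is_ideal_del_def using E_V by auto
  obtain x0 where x0: "x0 \<in> opt n a b" "corresponds n \<rho> t x0 {}" using bij2 id0 by blast
  obtain x1 where x1: "x1 \<in> opt n a b" "corresponds n \<rho> t x1 (V - {s,t})" using bij2 id1 by blast
  have eq: "whamming n w x0 x1 = W"
    unfolding whamming_def W_def
  proof (rule sum.cong)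
    fix i assume i: "i \<in> {1..n}"
    show "w i * \<bar>real (x0 i) - real (x1 i)\<bar> = (if \<rho> i \<noteq> s \<and> \<rho> i \<noteq> t then w i else 0)"
    proof (cases "\<rho> i \<noteq> s \<and> \<rho> i \<noteq> t")
      case True
      have "\<rho> i \<in> V" using rho_V i by auto
      have e1: "{i\<in>{1..n}. x1 i = 0} = {i\<in>{1..n}. \<rho> i = t} \<union> {i\<in>{1..n}. \<rho> i \<in> V - {s,t}}"
        using x1(2) unfolding corresponds_def .
      have e0: "{i\<in>{1..n}. x0 i = 0} = {i\<in>{1..n}. \<rho> i = t} \<union> {i\<in>{1..n}. \<rho> i \<in> {}}"
        using x0(2) unfolding corresponds_def .
      have "i \<in> {i\<in>{1..n}. x1 i = 0}" unfolding e1 using i True \<open>\<rho> i \<in> V\<close> by simp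
      then have "x1 i = 0" by simp
      moreover have "i \<notin> {i\<in>{1..n}. x0 i = 0}" unfolding e0 using i True by simp
      then have "x0 i \<noteq> 0" using i by simp
      moreover have "x0 i \<le> 1" using props[OF x0(1) i] by auto
      ultimately have "x0 i = 1" by auto
      then show ?thesis using True \<open>x1 i = 0\<close> by simp
    next
      case False
      then have "x0 i = x1 i" using props[OF x0(1) i] props[OF x1(1) i] by auto
      then show ?thesis using False by auto
    qed
  qed simp
  have fin: "finite {whamming n w x y | x y. x \<in> opt n a b \<and> y \<in> opt n a b}"
  proof -
    have "finite (opt n a b)" using finite_subset[OF oc finite_cube] .
    then have "finite ((\<lambda>(x,y). whamming n w x y) ` (opt n a b \<times> opt n a b))" by simp
    moreover have "{whamming n w x y | x y. x \<in> opt n a b \<and> y \<in> opt n a b}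
       = (\<lambda>(x,y). whamming n w x y) ` (opt n a b \<times> opt n a b)" by auto
    ultimately show ?thesis by simp
  qed
  have "diameter n w (opt n a b) = W"
    unfolding diameter_def
    by (rule Max_eqI[OF fin]) (use le x0 x1 eq in auto)
  then show ?thesis using fstW snd by simp
qed

end
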